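(* Let $\Sigma=\{\sigma_1,\sigma_2,\dots\}$ be an infinite alphabet totally ordered by $\sigma_1<\sigma_2<\cdots$, let $\mathsf A$ be the Manacher array of some string of length $n$, and let $S$ be the lexicographically minimal string over $\Sigma$ whose Manacher array is $\mathsf A$. Then: (1) For every $i\ge3$, the first occurrence of $\sigma_i$ in $S$, at position $m$ say, is preceded by a substring matching the pattern $ZP_{i-2}$ (i.e. some substring $S[t..m-1]$ matches $ZP_{i-2}$). (2) For every $i\ge3$, every later occurrence of $\sigma_i$ in $S$, at position $m$, is either at a palindromically dependent index or is preceded by a substring $S[t..m-1]$ matching $ZP_{i-2}$. (3) The number of distinct symbols occurring in $S$ equals the minimum number of distinct symbols over all strings (over any alphabet) whose Manacher array is $\mathsf A$.
   Context: The Manacher array of $S$ of length $n$: $\mathsf A[2k-1]$ is the largest $r\ge0$ with $1\le k-r$, $k+r\le n$, $S[k-r..k+r]$ a palindrome, and $\mathsf A[2k]$ the largest $r\ge0$ with $1\le k-r+1$, $k+r\le n$, $S[k-r+1..k+r]$ a palindrome. The center of $S[a..b]$ is $(a+b)/2$. An index $m$ of $S$ is palindromically dependent iff there is a palindromic substring $p=S[a..b]$ with center $c_p=(a+b)/2<m\le b$ (so $S[m]$ is forced equal to $S[a+b-m]$); otherwise it is palindromically independent. Palindromic Zimin patterns: a word matches $ZP_1$ if it is a palindrome $P_1$ (possibly empty); a word $W$ matches $ZP_k$ ($k\ge2$) if $W=U P_k U$ where $U$ matches $ZP_{k-1}$ using palindromes $P_1,\dots,P_{k-1}$, and $P_k$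 is a palindrome different from each of $P_1,\dots,P_{k-1}$. *)

theory Defs
  imports Main
begin

text \<open>Strings are lists; positions are 1-based as in the paper:
  the symbol at position m is  S ! (m - 1).
  The infinite ordered alphabet sigma_1 < sigma_2 < ... is modelled by nat,
  with sigma_i = i - 1 (so sigma_1 = 0).\<close>

definition sigma :: "nat \<Rightarrow> nat" where
  "sigma i = i - 1"

definition is_pal :: "'a list \<Rightarrow> bool" where
  "is_pal w \<longleftrightarrow> rev w = w"

text \<open>S[a..b] (1-based, inclusive); empty when b = a - 1.\<close>
definition substr :: "'a list \<Rightarrow> nat \<Rightarrow> nat \<Rightarrow> 'a list" where
  "substr S a b = take (b + 1 - a) (drop (a - 1) S)"

text \<open>Manacher array entries A[2k-1] and A[2k].\<close>
definition man_odd :: "'a list \<Rightarrow> nat \<Rightarrow> nat" where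
  "man_odd S k = (GREATEST r. r + 1 \<le> k \<and> k + r \<le> length S \<and>
                    is_pal (substr S (k - r) (k + r)))"

definition man_even :: "'a list \<Rightarrow> nat \<Rightarrow> nat" where
  "man_even S k = (GREATEST r. r \<le> k \<and> k + r \<le> length S \<and>
                    is_pal (substr S (k + 1 - r) (k + r)))"

text \<open>The Manacher array A[1..2n] as a list: list index j - 1 holds A[j].\<close>
definition manacher :: "'a list \<Rightarrow> nat list" where
  "manacher S = map (\<lambda>j. if odd j then man_odd S ((j + 1) div 2) else man_even S (j div 2))
                    [1..<2 * length S + 1]"

definition pal_dependent :: "'a list \<Rightarrow> nat \<Rightarrow> bool" where
  "pal_dependent S m \<longleftrightarrow> (\<exists>a b. 1 \<le> a \<and> a \<le> b \<and> b \<le> length S \<and>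
       is_pal (substr S a b) \<and> a + b < 2 * m \<and> m \<le> b)"

inductive zp_match :: "nat \<Rightarrow> 'a list list \<Rightarrow> 'a list \<Rightarrow> bool" where
  base: "is_pal P \<Longrightarrow> zp_match 1 [P] P"
| step: "zp_match k Ps U \<Longrightarrow> is_pal P \<Longrightarrow> P \<notin> set Ps \<Longrightarrow>
         zp_match (Suc k) (Ps @ [P]) (U @ P @ U)"

definition matches_ZP :: "nat \<Rightarrow> 'a list \<Rightarrow> bool" where
  "matches_ZP k W \<longleftrightarrow> (\<exists>Ps. zp_match k Ps W)"

definition lex_le :: "nat list \<Rightarrow> nat list \<Rightarrow> bool" where
  "lex_le S T \<longleftrightarrow> S = T \<or>
     (\<exists>i < min (length S) (length T). take i S = take i T \<and> S ! i < T ! i) \<or>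
     (length S < length T \<and> S = take (length S) T)"

end

theory Submission
  imports Defs
begin


definition palI :: "'a list \<Rightarrow> nat \<Rightarrow> nat \<Rightarrow> bool" where
  "palI X i j \<longleftrightarrow> (\<forall>t. i \<le> t \<and> t < j \<longrightarrow> X ! t = X ! (i + j - 1 - t))"

definition pe :: "'a list \<Rightarrow> 'b list \<Rightarrow> bool" where
  "pe X Y \<longleftrightarrow> length X = length Y \<and> (\<forall>i j. j \<le> length X \<longrightarrow> (palI X i j \<longleftrightarrow> palI Y i j))"

lemma is_pal_nth: "is_pal w \<longleftrightarrow> (\<forall>t < length w. w ! t = w ! (length w - 1 - t))"
proof -
  have "rev w = w \<longleftrightarrow> (\<forall>t<length w. w ! (length w - Suc t) = w ! t)"
    by (simp add: list_eq_iff_nth_eq rev_nth)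
  then show ?thesis unfolding is_pal_def by (metis diff_Suc_eq_diff_pred)
qed

lemma wnth: "k < length (take j (drop i X)) \<Longrightarrow> take j (drop i X) ! k = X ! (i + k)"
proof -
  assume k: "k < length (take j (drop i X))"
  then have "i \<le> length X" by (simp, arith)
  then show ?thesis using k nth_drop[of i X k] by simp
qed

lemma pal_conv: "is_pal (take j (drop i X)) \<longleftrightarrow> palI X i (min (i + j) (length X))"
proof -
  define M where "M = min (i + j) (length X)"
  let ?w = "take j (drop i X)"
  have len: "length ?w = M - i" unfolding M_def by auto
  show ?thesis
    unfolding is_pal_nth palI_def len M_def[symmetric]
  proof (intro iffI allI impI)
    fix t assume H: "\<forall>t<M - i. ?w ! t = ?w ! (M - i - 1 - t)"
      and t: "i \<le> t \<and> t < M"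
    have "?w ! (t - i) = ?w ! (M - i - 1 - (t - i))" using H t by (meson diff_less_mono)
    moreover have "?w ! (t - i) = X ! t" using t wnth[of "t - i" j i X] len by auto
    moreover have "?w ! (M - i - 1 - (t - i)) = X ! (i + (M - i - 1 - (t - i)))"
      using t wnth[of "M - i - 1 - (t - i)" j i X] len by auto
    moreover have "i + (M - i - 1 - (t - i)) = i + M - 1 - t" using t by arith
    ultimately show "X ! t = X ! (i + M - 1 - t)" by simp
  next
    fix t assume H: "\<forall>t. i \<le> t \<and> t < M \<longrightarrow> X ! t = X ! (i + M - 1 - t)"
      and t: "t < M - i"
    have "i \<le> i + t \<and> i + t < M" using t by arith
    then have "X ! (i + t) = X ! (i + M - 1 - (i + t))" using H by blast
    moreover have "?w ! t = X ! (i + t)" using t wnth[of t j i X] len by auto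
    moreover have "?w ! (M - i - 1 - t) = X ! (i + (M - i - 1 - t))"
      using t wnth[of "M - i - 1 - t" j i X] len by auto
    moreover have "i + (M - i - 1 - t) = i + M - 1 - (i + t)" using t by arith
    ultimately show "?w ! t = ?w ! (M - i - 1 - t)" by simp
  qed
qed

lemma substr_pal: "a \<le> b \<Longrightarrow> b \<le> length X \<Longrightarrow> is_pal (substr X (Suc a) b) \<longleftrightarrow> palI X a b"
  unfolding substr_def using pal_conv[of "b - a" a X] by (simp add: min_def)

lemma palI_conc: "palI X a b \<Longrightarrow> a \<le> a' \<Longrightarrow> a' + b' = a + b \<Longrightarrow> palI X a' b'"
  unfolding palI_def by auto

lemma palI_triv: "j \<le> Suc i \<Longrightarrow> palI X i j"
  unfolding palI_def
proof (intro allI impI)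
  fix t assume "j \<le> Suc i" "i \<le> t \<and> t < j"
  then have "t = i" "j = Suc i" by auto
  then show "X ! t = X ! (i + j - 1 - t)" by simp
qed

lemma palI_peel: "i < j \<Longrightarrow> palI X i j \<longleftrightarrow> (X ! i = X ! (j - 1) \<and> palI X (Suc i) (j - 1))"
  unfolding palI_def
proof (intro iffI conjI allI impI)
  assume "i < j" and H: "\<forall>t. i \<le> t \<and> t < j \<longrightarrow> X ! t = X ! (i + j - 1 - t)"
  have "i + j - 1 - i = j - 1" by arith
  then show "X ! i = X ! (j - 1)" using H[rule_format, of i] \<open>i < j\<close> by simp
next
  fix t assume "i < j" and H: "\<forall>t. i \<le> t \<and> t < j \<longrightarrow> X ! t = X ! (i + j - 1 - t)"
    and t: "Suc i \<le> t \<and> t < j - 1"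
  have e: "Suc i + (j - 1) - 1 - t = i + j - 1 - t" using t by arith
  have "X ! t = X ! (i + j - 1 - t)" using H t by auto
  then show "X ! t = X ! (Suc i + (j - 1) - 1 - t)" by (simp only: e)
next
  fix t assume H: "i < j" "X ! i = X ! (j - 1) \<and> (\<forall>t. Suc i \<le> t \<and> t < j - 1 \<longrightarrow> X ! t = X ! (Suc i + (j - 1) - 1 - t))" "i \<le> t \<and> t < j"
  show "X ! t = X ! (i + j - 1 - t)"
  proof (cases "t = i")
    case True
    have "i + j - 1 - i = j - 1" by arith
    then show ?thesis using H True by simp
  next
    case f1: False
    show ?thesis
    proof (cases "t = j - 1")
      case True
      have "i + j - 1 - t = i" using True H by arith
      then show ?thesis using H True by simp
    next
      case False
      then have "Suc i \<le> t \<and> t < j - 1" using H f1 by auto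
      moreover have "Suc i + (j - 1) - 1 - t = i + j - 1 - t" using H by arith
      ultimately show ?thesis using H by metis
    qed
  qed
qed

lemma greatest_char:
  fixes P :: "nat \<Rightarrow> bool"
  assumes b: "\<And>r. P r \<Longrightarrow> r \<le> B" and z: "P 0" and d: "\<And>r r'. P r \<Longrightarrow> r' \<le> r \<Longrightarrow> P r'"
  shows "P r \<longleftrightarrow> r \<le> (GREATEST r. P r)"
proof
  assume "P r" then show "r \<le> (GREATEST r. P r)" using Greatest_le_nat[of P r B] b by blast
next
  assume "r \<le> (GREATEST r. P r)"
  moreover have "P (GREATEST r. P r)" using GreatestI_nat[of P 0 B] z b by blast
  ultimately show "P r" using d by blast
qed

lemma manacher_nth:
  assumes "1 \<le> q" "q \<le> 2 * length X"
  shows "manacher X ! (q - 1) = (if odd q then man_odd X ((q + 1) div 2) else man_even X (q div 2))"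
proof -
  have "q - 1 < length [1..<2 * length X + 1]" using assms by simp
  moreover have "[1..<2 * length X + 1] ! (q - 1) = q" using assms by (subst nth_upt) auto
  ultimately show ?thesis unfolding manacher_def by simp
qed

lemma palI_man_odd:
  assumes ij: "i < j" "j \<le> length X" and o: "odd (j - i)"
  shows "palI X i j \<longleftrightarrow> (j - i) div 2 \<le> man_odd X ((i + j + 1) div 2)"
proof -
  define n where "n = length X"
  define k where "k = (i + j + 1) div 2"
  define r where "r = (j - i) div 2"
  have jr: "j - i = 2 * r + 1" using o unfolding r_def by presburger
  have kr: "k = i + r + 1" unfolding k_def using jr ij by presburger
  define P where "P = (\<lambda>r. r + 1 \<le> k \<and> k + r \<le> length X \<and> is_pal (substr X (k - r) (k + r)))"
  have P': "P r' \<longleftrightarrow> r' + 1 \<le> k \<and> k + r' \<le> length X \<and> palI X (k - r' - 1) (k + r')" for r'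
  proof -
    have "r' + 1 \<le> k \<Longrightarrow> k - r' = Suc (k - r' - 1)" by arith
    then show ?thesis unfolding P_def using substr_pal[of "k - r' - 1" "k + r'" X] by auto
  qed
  have "P r \<longleftrightarrow> r \<le> (GREATEST r. P r)"
  proof (rule greatest_char)
    show "P r' \<Longrightarrow> r' \<le> length X" for r' unfolding P_def by auto
    show "P 0" unfolding P' using kr ij jr by (auto intro: palI_triv)
    show "P r' \<Longrightarrow> r'' \<le> r' \<Longrightarrow> P r''" for r' r''
      unfolding P' by (auto elim!: palI_conc)
  qed
  moreover have "P r \<longleftrightarrow> palI X i j"
  proof -
    have "k - r - 1 = i" "k + r = j" using kr jr ij by arith+
    then show ?thesis unfolding P' using kr ij by auto
  qed
  moreover have "man_odd X k = (GREATEST r. P r)" unfolding man_odd_def P_def ..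
  ultimately show ?thesis unfolding k_def r_def by simp
qed

lemma palI_man_even:
  assumes ij: "i < j" "j \<le> length X" and o: "even (j - i)"
  shows "palI X i j \<longleftrightarrow> (j - i) div 2 \<le> man_even X ((i + j) div 2)"
proof -
  define k where "k = (i + j) div 2"
  define r where "r = (j - i) div 2"
  have jr: "j - i = 2 * r" using o unfolding r_def by presburger
  have kr: "k = i + r" unfolding k_def using jr ij by presburger
  define P where "P = (\<lambda>r. r \<le> k \<and> k + r \<le> length X \<and> is_pal (substr X (k + 1 - r) (k + r)))"
  have P': "P r' \<longleftrightarrow> r' \<le> k \<and> k + r' \<le> length X \<and> palI X (k - r') (k + r')" for r'
  proof -
    have "r' \<le> k \<Longrightarrow> k + 1 - r' = Suc (k - r')" by arith
    then show ?thesis unfolding P_def using substr_pal[of "k - r'" "k + r'" X] by auto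
  qed
  have "P r \<longleftrightarrow> r \<le> (GREATEST r. P r)"
  proof (rule greatest_char)
    show "P r' \<Longrightarrow> r' \<le> length X" for r' unfolding P_def by auto
    show "P 0" unfolding P' using kr ij jr by (auto intro: palI_triv)
    show "P r' \<Longrightarrow> r'' \<le> r' \<Longrightarrow> P r''" for r' r''
      unfolding P' by (auto elim!: palI_conc)
  qed
  moreover have "P r \<longleftrightarrow> palI X i j"
  proof -
    have "k - r = i" "k + r = j" using kr jr ij by arith+
    then show ?thesis unfolding P' using kr ij by auto
  qed
  moreover have "man_even X k = (GREATEST r. P r)" unfolding man_even_def P_def ..
  ultimately show ?thesis unfolding k_def r_def by simp
qed

lemma palI_man:
  assumes ij: "i < j" "j \<le> length X"
  shows "palI X i j \<longleftrightarrow> (j - i) div 2 \<le> manacher X ! (i + j - 1)"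
proof -
  have q: "1 \<le> i + j" "i + j \<le> 2 * length X" using ij by auto
  show ?thesis
  proof (cases "odd (i + j)")
    case True
    then have "odd (j - i)" using ij by presburger
    then show ?thesis using manacher_nth[OF q] True palI_man_odd[OF ij] by simp
  next
    case False
    then have "even (j - i)" using ij by presburger
    then show ?thesis using manacher_nth[OF q] False palI_man_even[OF ij] by simp
  qed
qed

lemma manacher_pe: "manacher X = manacher Y \<Longrightarrow> pe X Y"
proof -
  assume m: "manacher X = manacher Y"
  have l: "length X = length Y" using arg_cong[OF m, of length] unfolding manacher_def by (simp del: upt_Suc)
  show "pe X Y" unfolding pe_def
  proof (intro conjI allI impI l)
    fix i j assume "j \<le> length X"
    then show "palI X i j \<longleftrightarrow> palI Y i j"
      using palI_man[of i j X] palI_man[of i j Y] l m palI_triv[of j i X] palI_triv[of j i Y]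
      by (cases "i < j") auto
  qed
qed

lemma pe_manacher: "pe X Y \<Longrightarrow> manacher X = manacher Y"
proof -
  assume p: "pe X Y"
  then have l: "length X = length Y" unfolding pe_def by simp
  have sp: "is_pal (substr X a b) \<longleftrightarrow> is_pal (substr Y a b)" for a b
    unfolding substr_def pal_conv using p l unfolding pe_def by simp
  have "man_odd X = man_odd Y" "man_even X = man_even Y"
    unfolding man_odd_def man_even_def sp l by (rule refl)+
  then show ?thesis unfolding manacher_def l by simp
qed



lemma palI_take: "j \<le> k \<Longrightarrow> palI (take k X) i j \<longleftrightarrow> palI X i j"
  unfolding palI_def
proof (intro iffI allI impI)
  fix t assume H: "j \<le> k" "\<forall>t. i \<le> t \<and> t < j \<longrightarrow> take k X ! t = take k X ! (i + j - 1 - t)" "i \<le> t \<and> t < j"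
  then have "take k X ! t = take k X ! (i + j - 1 - t)" by blast
  moreover have "i + j - 1 - t < k" "t < k" using H by arith+
  ultimately show "X ! t = X ! (i + j - 1 - t)" by simp
next
  fix t assume H: "j \<le> k" "\<forall>t. i \<le> t \<and> t < j \<longrightarrow> X ! t = X ! (i + j - 1 - t)" "i \<le> t \<and> t < j"
  then have "X ! t = X ! (i + j - 1 - t)" by blast
  moreover have "i + j - 1 - t < k" "t < k" using H by arith+
  ultimately show "take k X ! t = take k X ! (i + j - 1 - t)" by simp
qed

lemma palI_append: "j \<le> length X \<Longrightarrow> palI (X @ Y) i j \<longleftrightarrow> palI X i j"
  using palI_take[of j "length X" "X @ Y" i] by simp

lemma pe_refl: "pe X X" unfolding pe_def by simp

lemma pe_sym: "pe X Y \<Longrightarrow> pe Y X" unfolding pe_def by simp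

lemma pe_trans: "pe X Y \<Longrightarrow> pe Y Z \<Longrightarrow> pe X Z" unfolding pe_def by simp

lemma pe_len: "pe X Y \<Longrightarrow> length X = length Y" unfolding pe_def by simp

lemma pe_palI: "pe X Y \<Longrightarrow> j \<le> length X \<Longrightarrow> palI X i j \<longleftrightarrow> palI Y i j" unfolding pe_def by simp

lemma pe_take: "pe X Y \<Longrightarrow> k \<le> length X \<Longrightarrow> pe (take k X) (take k Y)"
proof -
  assume p: "pe X Y" and k: "k \<le> length X"
  have l: "length X = length Y" using p pe_len by blast
  show ?thesis unfolding pe_def
  proof (intro conjI allI impI)
    show "length (take k X) = length (take k Y)" using l by simp
    fix i j assume "j \<le> length (take k X)"
    then have j: "j \<le> k" using k by simp
    show "palI (take k X) i j \<longleftrightarrow> palI (take k Y) i j"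
      using palI_take[OF j, of X i] palI_take[OF j, of Y i] pe_palI[OF p, of j i] j k by simp
  qed
qed

lemma step_char:
  assumes pe: "pe X Z" and len: "length X = p"
    and c: "\<forall>i<p. palI X (Suc i) p \<longrightarrow> (X ! i = x \<longleftrightarrow> Z ! i = z)"
  shows "pe (X @ [x]) (Z @ [z])"
  unfolding pe_def
proof (intro conjI allI impI)
  have lZ: "length Z = p" using pe len pe_len by metis
  show "length (X @ [x]) = length (Z @ [z])" using len lZ by simp
  fix i j assume j: "j \<le> length (X @ [x])"
  show "palI (X @ [x]) i j \<longleftrightarrow> palI (Z @ [z]) i j"
  proof (cases "j \<le> p")
    case True
    then show ?thesis using palI_append[of j X "[x]" i] palI_append[of j Z "[z]" i] len lZ pe_palI[OF pe] by simp
  next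
    case False
    then have jp: "j = Suc p" using j len by simp
    show ?thesis
    proof (cases "i < p")
      case False
      then show ?thesis using palI_triv[of j i "X@[x]"] palI_triv[of j i "Z@[z]"] jp by simp
    next
      case True
      have "palI (X @ [x]) i j \<longleftrightarrow> (X @ [x]) ! i = (X @ [x]) ! p \<and> palI (X @ [x]) (Suc i) p"
        using palI_peel[of i j "X @ [x]"] jp True by simp
      also have "\<dots> \<longleftrightarrow> X ! i = x \<and> palI X (Suc i) p"
        using palI_append[of p X "[x]" "Suc i"] True len by (simp add: nth_append)
      also have "\<dots> \<longleftrightarrow> Z ! i = z \<and> palI Z (Suc i) p"
        using c True pe_palI[OF pe, of p "Suc i"] len by auto
      also have "\<dots> \<longleftrightarrow> (Z @ [z]) ! i = (Z @ [z]) ! p \<and> palI (Z @ [z]) (Suc i) p"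
        using palI_append[of p Z "[z]" "Suc i"] True lZ by (simp add: nth_append)
      also have "\<dots> \<longleftrightarrow> palI (Z @ [z]) i j"
        using palI_peel[of i j "Z @ [z]"] jp True by simp
      finally show ?thesis .
    qed
  qed
qed

lemma ker_aux:
  assumes ii: "i < i'" "i' < p" and h: "palI W (Suc i) p" "palI W (Suc i') p"
  shows "W ! i = W ! i' \<longleftrightarrow> palI W i (i + p - i' + 1)"
proof -
  define e where "e = i + p - i'"
  have h1: "W ! i' = W ! e"
  proof -
    have "W ! i' = W ! (Suc i + p - 1 - i')" using h(1) ii unfolding palI_def by auto
    moreover have "Suc i + p - 1 - i' = e" unfolding e_def using ii by arith
    ultimately show ?thesis by simp
  qed
  have h2: "palI W (Suc i) e"
    unfolding palI_def
  proof (intro allI impI)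
    fix t assume t: "Suc i \<le> t \<and> t < e"
    have a1: "W ! t = W ! (Suc i + p - 1 - t)" using h(1) t ii unfolding palI_def e_def by auto
    have "Suc i' \<le> Suc i + p - 1 - t \<and> Suc i + p - 1 - t < p" using t ii unfolding e_def by arith
    then have a2: "W ! (Suc i + p - 1 - t) = W ! (Suc i' + p - 1 - (Suc i + p - 1 - t))"
      using h(2) unfolding palI_def by blast
    define s where "s = Suc i + e - 1 - t"
    have a3: "W ! s = W ! (Suc i + p - 1 - s)"
    proof -
      have "Suc i \<le> s \<and> s < p" unfolding s_def e_def using t ii unfolding e_def by arith
      then show ?thesis using h(1) unfolding palI_def by blast
    qed
    have "Suc i' + p - 1 - (Suc i + p - 1 - t) = Suc i + p - 1 - s" unfolding s_def e_def using t ii unfolding e_def by arith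
    then show "W ! t = W ! (Suc i + e - 1 - t)" using a1 a2 a3 unfolding s_def by simp
  qed
  have "palI W i (e + 1) \<longleftrightarrow> W ! i = W ! e \<and> palI W (Suc i) e"
    using palI_peel[of i "e + 1" W] ii unfolding e_def by simp
  then show ?thesis using h1 h2 unfolding e_def by auto
qed



lemma ker:
  assumes pe: "pe X Z" and p: "p \<le> length X" and ii: "i < p" "i' < p"
    and h: "palI X (Suc i) p" "palI X (Suc i') p"
  shows "X ! i = X ! i' \<longleftrightarrow> Z ! i = Z ! i'"
proof -
  have hz: "palI Z (Suc i) p" "palI Z (Suc i') p" using h pe_palI[OF pe p] by auto
  have gen: "X ! a = X ! b \<longleftrightarrow> Z ! a = Z ! b" if ab: "a < b" "b < p"
     "palI X (Suc a) p" "palI X (Suc b) p" "palI Z (Suc a) p" "palI Z (Suc b) p" for a b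
  proof -
    have "X ! a = X ! b \<longleftrightarrow> palI X a (a + p - b + 1)" using ker_aux[of a b p X] ab by blast
    also have "\<dots> \<longleftrightarrow> palI Z a (a + p - b + 1)" using pe_palI[OF pe, of "a + p - b + 1" a] ab p by simp
    also have "\<dots> \<longleftrightarrow> Z ! a = Z ! b" using ker_aux[of a b p Z] ab by blast
    finally show ?thesis .
  qed
  show ?thesis
  proof (cases i i' rule: linorder_cases)
    case less then show ?thesis using gen[of i i'] ii h hz by blast
  next
    case equal then show ?thesis by simp
  next
    case greater then show ?thesis using gen[of i' i] ii h hz by metis
  qed
qed

lemma ext_step:
  fixes X :: "nat list" and T :: "'a list"
  assumes pe: "pe X (take j T)" and len: "length X = j" and j: "j < length T"
  shows "\<exists>c. pe (X @ [c]) (take (Suc j) T)"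
proof -
  have tk: "take (Suc j) T = take j T @ [T ! j]" using j by (simp add: take_Suc_conv_app_nth)
  have ltk: "length (take j T) = j" using j by simp
  show ?thesis
  proof (cases "\<exists>i0<j. palI X (Suc i0) j \<and> T ! i0 = T ! j")
    case True
    then obtain i0 where i0: "i0 < j" "palI X (Suc i0) j" "T ! i0 = T ! j" by blast
    have "pe (X @ [X ! i0]) (take j T @ [T ! j])"
    proof (rule step_char[OF pe len], intro allI impI)
      fix i assume i: "i < j" "palI X (Suc i) j"
      have "X ! i = X ! i0 \<longleftrightarrow> take j T ! i = take j T ! i0"
        using ker[OF pe _ i(1) i0(1) i(2) i0(2)] len by simp
      then show "X ! i = X ! i0 \<longleftrightarrow> take j T ! i = T ! j" using i i0 by simp
    qed
    then show ?thesis using tk by auto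
  next
    case False
    have "pe (X @ [Suc (sum_list X)]) (take j T @ [T ! j])"
    proof (rule step_char[OF pe len], intro allI impI)
      fix i assume i: "i < j" "palI X (Suc i) j"
      have "X ! i \<le> sum_list X" using i len elem_le_sum_list by metis
      moreover have "T ! i \<noteq> T ! j" using False i by blast
      ultimately show "X ! i = Suc (sum_list X) \<longleftrightarrow> take j T ! i = T ! j" using i by simp
    qed
    then show ?thesis using tk by auto
  qed
qed

lemma extension:
  fixes X :: "nat list" and T :: "'a list"
  shows "pe X (take j T) \<Longrightarrow> length X = j \<Longrightarrow> j \<le> length T \<Longrightarrow> \<exists>Y. pe (X @ Y) T"
proof (induction "length T - j" arbitrary: X j)
  case 0
  then have "j = length T" by simp
  then show ?case using 0 by (metis append_Nil2 take_all order_refl)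
next
  case (Suc d)
  then have j: "j < length T" by simp
  obtain c where c: "pe (X @ [c]) (take (Suc j) T)" using ext_step[OF Suc.prems(1,2) j] by blast
  have "\<exists>Y. pe ((X @ [c]) @ Y) T"
    using Suc.hyps(1)[of "Suc j" "X @ [c]"] Suc.hyps(2) c Suc.prems j by simp
  then show ?case by (metis append_Cons append_assoc self_append_conv2)
qed

lemma lex_le_contra:
  assumes l: "length A = length B" and p: "p < length A" and tk: "take p A = take p B"
    and lt: "B ! p < A ! p"
  shows "\<not> lex_le A B"
proof
  assume "lex_le A B"
  then consider "A = B" | i where "i < min (length A) (length B)" "take i A = take i B" "A ! i < B ! i"
    | "length A < length B \<and> A = take (length A) B"
    unfolding lex_le_def by blast
  then show False
  proof cases
    case 1 then show False using lt by simp
  next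
    case (2 i)
    show False
    proof (cases i p rule: linorder_cases)
      case less
      then have "A ! i = B ! i" using tk by (metis nth_take)
      then show False using 2 by simp
    next
      case equal then show False using 2 lt by simp
    next
      case greater
      then have "A ! p = B ! p" using 2 by (metis nth_take)
      then show False using lt by simp
    qed
  next
    case 3 then show False using l by simp
  qed
qed

lemma lexmin_small:
  fixes T :: "'a list" and S :: "nat list"
  assumes manS: "manacher S = manacher T"
    and lexmin: "\<forall>S' :: nat list. manacher S' = manacher T \<longrightarrow> lex_le S S'"
    and p: "p < length S" and ind: "\<not> (\<exists>i<p. palI S i (Suc p))" and v: "v < S ! p"
  shows "\<exists>a<p. palI S (Suc a) p \<and> S ! a = v"
proof (rule ccontr)
  assume nv: "\<not> (\<exists>a<p. palI S (Suc a) p \<and> S ! a = v)"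
  have peST: "pe S T" using manacher_pe[OF manS] .
  have lt: "length (take p S) = p" using p by simp
  have "pe (take p S @ [v]) (take p S @ [S ! p])"
  proof (rule step_char[OF pe_refl lt], intro allI impI)
    fix i assume i: "i < p" "palI (take p S) (Suc i) p"
    then have pi: "palI S (Suc i) p" using palI_take[of p p S "Suc i"] by simp
    have "take p S ! i \<noteq> v" using nv i pi by simp
    moreover have "S ! i \<noteq> S ! p"
    proof
      assume "S ! i = S ! p"
      then have "palI S i (Suc p)" using palI_peel[of i "Suc p" S] pi i by simp
      then show False using ind i by blast
    qed
    ultimately show "take p S ! i = v \<longleftrightarrow> take p S ! i = S ! p" using i by simp
  qed
  then have a: "pe (take p S @ [v]) (take (Suc p) S)" using p by (simp add: take_Suc_conv_app_nth)
  have "pe (take (Suc p) S) (take (Suc p) T)" using pe_take[OF peST] p by simp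
  then have "pe (take p S @ [v]) (take (Suc p) T)" using a pe_trans by blast
  moreover have "Suc p \<le> length T" using p pe_len[OF peST] by simp
  ultimately obtain Y where Y: "pe ((take p S @ [v]) @ Y) T" using extension[of "take p S @ [v]" "Suc p" T] p by auto
  define S' where "S' = (take p S @ [v]) @ Y"
  have "manacher S' = manacher T" using pe_manacher[OF Y] unfolding S'_def .
  then have "lex_le S S'" using lexmin by blast
  moreover have "length S = length S'" using pe_len[OF Y] pe_len[OF peST] unfolding S'_def by simp
  moreover have "take p S = take p S'" unfolding S'_def using p by simp
  moreover have "S' ! p = v" unfolding S'_def using p by (simp add: nth_append)
  ultimately show False using lex_le_contra[of S S' p] p v by simp
qed



definition PP :: "'a list \<Rightarrow> nat \<Rightarrow> bool" where
  "PP V l \<longleftrightarrow> l < length V \<and> is_pal (take l V)"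

definition Pr :: "'a list \<Rightarrow> nat \<Rightarrow> 'a set" where
  "Pr V L = (\<lambda>l. V ! l) ` {l. l < L \<and> PP V l}"

definition MM :: "'a list \<Rightarrow> nat \<Rightarrow> nat set" where
  "MM V L = {l. l < L \<and> PP V l \<and> V ! l \<notin> Pr V l}"

lemma Pr_finite: "finite (Pr V L)" unfolding Pr_def by auto

lemma Pr_mono: "L1 \<le> L2 \<Longrightarrow> Pr V L1 \<subseteq> Pr V L2" unfolding Pr_def by auto

lemma Pr_mem: "l < L \<Longrightarrow> PP V l \<Longrightarrow> V ! l \<in> Pr V L" unfolding Pr_def by auto

lemma MM_rep:
  assumes "c \<in> Pr V L0" shows "\<exists>l\<in>MM V L0. V ! l = c"
proof -
  obtain l where l: "l < L0" "PP V l" "V ! l = c" using assms unfolding Pr_def by auto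
  define l0 where "l0 = (LEAST l. l < L0 \<and> PP V l \<and> V ! l = c)"
  have l0: "l0 < L0 \<and> PP V l0 \<and> V ! l0 = c" unfolding l0_def
    using LeastI[of "\<lambda>l. l < L0 \<and> PP V l \<and> V ! l = c" l] l by blast
  have "V ! l0 \<notin> Pr V l0"
  proof
    assume "V ! l0 \<in> Pr V l0"
    then obtain l1 where "l1 < l0" "PP V l1" "V ! l1 = V ! l0" unfolding Pr_def by auto
    then have "l1 < L0 \<and> PP V l1 \<and> V ! l1 = c" using l0 by simp
    then have "l0 \<le> l1" unfolding l0_def by (rule Least_le)
    then show False using \<open>l1 < l0\<close> by simp
  qed
  then show ?thesis using l0 unfolding MM_def by auto
qed

lemma MM_ins:
  assumes ne: "Pr V L0 \<noteq> {}"
  defines "L' \<equiv> Max (MM V L0)"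
  shows "L' \<in> MM V L0" "Pr V L0 = insert (V ! L') (Pr V L')"
proof -
  have fin: "finite (MM V L0)" unfolding MM_def by auto
  obtain c where "c \<in> Pr V L0" using ne by auto
  then have nem: "MM V L0 \<noteq> {}" using MM_rep by fastforce
  show L'm: "L' \<in> MM V L0" unfolding L'_def using Max_in[OF fin nem] .
  then have L': "L' < L0" "PP V L'" "V ! L' \<notin> Pr V L'" unfolding MM_def by auto
  show "Pr V L0 = insert (V ! L') (Pr V L')"
  proof
    show "insert (V ! L') (Pr V L') \<subseteq> Pr V L0" using L' Pr_mono[of L' L0 V] Pr_mem[of L' L0 V] by auto
  next
    show "Pr V L0 \<subseteq> insert (V ! L') (Pr V L')"
    proof
      fix c assume "c \<in> Pr V L0"
      then obtain l where l: "l \<in> MM V L0" "V ! l = c" using MM_rep[of c V L0] by blast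
      then have "l \<le> L'" unfolding L'_def using fin by simp
      then show "c \<in> insert (V ! L') (Pr V L')"
      proof (cases "l = L'")
        case True then show ?thesis using l by simp
      next
        case False
        then have "l < L'" using \<open>l \<le> L'\<close> by simp
        moreover have "PP V l" using l unfolding MM_def by simp
        ultimately show ?thesis using Pr_mem l by fastforce
      qed
    qed
  qed
qed

lemma pal_take_iff:
  "L \<le> length V \<Longrightarrow> is_pal (take L V) \<longleftrightarrow> (\<forall>x<L. V ! x = V ! (L - 1 - x))"
  unfolding is_pal_nth by (auto simp: min_def)

lemma period:
  assumes p1: "is_pal (take L V)" and p2: "is_pal (take L' V)" and ll: "L' < L" "L < 2 * L'" "L \<le> length V"
  shows "is_pal (take (2 * L' - L) V) \<and> V ! (2 * L' - L) = V ! L'"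
proof -
  have b: "V ! x = V ! (L - 1 - x)" if "x < L" for x using p1 pal_take_iff[of L V] ll that by blast
  have "L' \<le> length V" using ll by simp
  then have s: "V ! x = V ! (L' - 1 - x)" if "x < L'" for x using p2 pal_take_iff[of L' V] that by blast
  define d where "d = L - L'"
  have per: "V ! x = V ! (x - d)" if x: "d \<le> x" "x < L" for x
  proof -
    have "V ! x = V ! (L - 1 - x)" using b x by blast
    also have "\<dots> = V ! (L' - 1 - (L - 1 - x))" using s[of "L - 1 - x"] x unfolding d_def by arith
    also have "L' - 1 - (L - 1 - x) = x - d" using x ll unfolding d_def by arith
    finally show ?thesis .
  qed
  have lenok: "2 * L' - L \<le> length V" using ll by arith
  have "\<forall>x<2 * L' - L. V ! x = V ! (2 * L' - L - 1 - x)"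
  proof (intro allI impI)
    fix x assume x: "x < 2 * L' - L"
    have "x < L'" using x ll by arith
    then have "V ! x = V ! (L' - 1 - x)" using s by blast
    also have "\<dots> = V ! (L' - 1 - x - d)"
    proof -
      have "d \<le> L' - 1 - x" "L' - 1 - x < L" using x ll unfolding d_def by arith+
      then show ?thesis using per by blast
    qed
    also have "L' - 1 - x - d = 2 * L' - L - 1 - x" unfolding d_def using x ll by arith
    finally show "V ! x = V ! (2 * L' - L - 1 - x)" .
  qed
  then have "is_pal (take (2 * L' - L) V)" using pal_take_iff[OF lenok] by blast
  moreover have "V ! L' = V ! (2 * L' - L)"
  proof -
    have "d \<le> L'" "L' < L" using ll unfolding d_def by arith+
    then have "V ! L' = V ! (L' - d)" using per by blast
    moreover have "L' - d = 2 * L' - L" unfolding d_def using ll by arith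
    ultimately show ?thesis by simp
  qed
  ultimately show ?thesis by simp
qed

lemma decomp:
  assumes p1: "is_pal (take L V)" and p2: "is_pal (take L' V)" and ll: "2 * L' \<le> L" "L \<le> length V"
  shows "take L V = take L' V @ drop L' (take (L - L') V) @ take L' V"
    and "is_pal (drop L' (take (L - L') V))"
proof -
  define Q where "Q = take L V"
  define Q' where "Q' = take L' V"
  define P where "P = drop L' (take (L - L') V)"
  have lQ: "length Q = L" unfolding Q_def using ll by simp
  have rQ: "rev Q = Q" using p1 unfolding Q_def is_pal_def .
  have rQ': "rev Q' = Q'" using p2 unfolding Q'_def is_pal_def .
  have "rev (drop (L - L') Q) = take L' Q" using rev_drop[of "L - L'" Q] rQ lQ ll by simp
  also have "\<dots> = Q'" unfolding Q_def Q'_def using ll by (simp add: min_def)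
  finally have B: "drop (L - L') Q = Q'" using rQ' by (metis rev_rev_ident)
  have A: "take (L - L') Q = Q' @ P"
  proof -
    have "take (L - L') Q = take (L - L') V" unfolding Q_def using ll by (simp add: min_def)
    moreover have "L' \<le> L - L'" using ll by arith
    then have "take L' (take (L - L') V) = Q'" unfolding Q'_def by (simp add: min_def)
    ultimately show ?thesis unfolding P_def by (metis append_take_drop_id)
  qed
  have Qd: "Q = Q' @ P @ Q'" using A B append_take_drop_id[of "L - L'" Q] by simp
  then show "take L V = take L' V @ drop L' (take (L - L') V) @ take L' V" unfolding Q_def Q'_def P_def by simp
  have "rev Q = Q' @ rev P @ Q'" using Qd rQ' by simp
  then have "rev P = P" using rQ Qd by simp
  then show "is_pal (drop L' (take (L - L') V))" unfolding is_pal_def P_def .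
qed



lemma is_pal_Nil: "is_pal []" unfolding is_pal_def by simp

lemma ZPmain:
  "PP V L \<Longrightarrow> V ! L \<notin> Pr V L \<Longrightarrow> Pr V L \<noteq> {} \<Longrightarrow>
   \<exists>Ps. zp_match (card (Pr V L)) Ps (take L V) \<and> (\<forall>P\<in>set Ps. P \<noteq> [] \<and> hd P \<in> Pr V L)"
proof (induction L rule: less_induct)
  case (less L)
  define L' where "L' = Max (MM V L)"
  have L'm: "L' \<in> MM V L" and ins: "Pr V L = insert (V ! L') (Pr V L')"
    using MM_ins[OF less.prems(3)] unfolding L'_def by auto
  have L': "L' < L" "PP V L'" "V ! L' \<notin> Pr V L'" using L'm unfolding MM_def by auto
  have cardL: "card (Pr V L) = Suc (card (Pr V L'))" using ins card_insert_disjoint[OF Pr_finite[of V L'] L'(3)] by simp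
  have pL: "is_pal (take L V)" "L < length V" using less.prems(1) unfolding PP_def by auto
  have pL': "is_pal (take L' V)" using L'(2) unfolding PP_def by auto
  have PP0: "PP V 0" unfolding PP_def using pL(2) by (auto simp add: is_pal_Nil)
  show ?case
  proof (cases "Pr V L' = {}")
    case True
    then have c1: "card (Pr V L) = 1" using cardL by simp
    have ne: "take L V \<noteq> []" using L'(1) pL by auto
    have "hd (take L V) = V ! 0" using ne by (simp add: hd_conv_nth)
    moreover have "V ! 0 \<in> Pr V L" using Pr_mem[OF _ PP0, of L] L'(1) by simp
    ultimately have "\<forall>P\<in>set [take L V]. P \<noteq> [] \<and> hd P \<in> Pr V L" using ne by simp
    moreover have "zp_match 1 [take L V] (take L V)" using pL(1) by (rule zp_match.base)
    ultimately show ?thesis using c1 by metis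
  next
    case False
    obtain Ps where Ps: "zp_match (card (Pr V L')) Ps (take L' V)" "\<forall>P\<in>set Ps. P \<noteq> [] \<and> hd P \<in> Pr V L'"
      using less.IH[OF L'(1) L'(2) L'(3) False] by blast
    have L'pos: "0 < L'"
    proof (rule ccontr)
      assume "\<not> 0 < L'"
      then have "L' = 0" by simp
      then have "Pr V L' = {}" unfolding Pr_def by simp
      then show False using False by simp
    qed
    have V0: "V ! 0 \<in> Pr V L'" using Pr_mem[OF L'pos PP0] .
    have two: "2 * L' \<le> L"
    proof (rule ccontr)
      assume "\<not> 2 * L' \<le> L"
      then have "L < 2 * L'" by simp
      then have per: "is_pal (take (2 * L' - L) V) \<and> V ! (2 * L' - L) = V ! L'"
        using period[OF pL(1) pL' L'(1)] pL(2) by simp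
      have "2 * L' - L < L'" using L'(1) L'pos by arith
      moreover have "PP V (2 * L' - L)" unfolding PP_def using per pL(2) L'(1) by auto
      ultimately have "V ! (2 * L' - L) \<in> Pr V L'" by (rule Pr_mem)
      then show False using per L'(3) by simp
    qed
    define P where "P = drop L' (take (L - L') V)"
    have dec: "take L V = take L' V @ P @ take L' V" and pP: "is_pal P"
      using decomp[OF pL(1) pL' two] pL(2) unfolding P_def by auto
    have Pne: "P \<noteq> []"
    proof
      assume "P = []"
      then have e: "take L V = take L' V @ take L' V" using dec by simp
      then have "length (take L V) = 2 * L'" using pL(2) L'(1) by simp
      then have "L = 2 * L'" using pL(2) by simp
      then have "V ! L' = take L V ! L'" using L'(1) by simp
      also have "\<dots> = (take L' V @ take L' V) ! L'" using e by simp
      also have "\<dots> = V ! 0" using L'(1) L'pos pL(2) by (simp add: nth_append)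
      finally show False using V0 L'(3) by simp
    qed
    have hdP: "hd P = V ! L'"
    proof -
      have "L' < L - L'" using Pne unfolding P_def using pL(2) by (auto simp: min_def split: if_splits)
      then show ?thesis using Pne unfolding P_def by (simp add: hd_conv_nth)
    qed
    have notin: "P \<notin> set Ps" using Ps(2) hdP L'(3) by metis
    have "zp_match (Suc (card (Pr V L'))) (Ps @ [P]) (take L' V @ P @ take L' V)"
      by (rule zp_match.step[OF Ps(1) pP notin])
    moreover have "\<forall>Q\<in>set (Ps @ [P]). Q \<noteq> [] \<and> hd Q \<in> Pr V L"
      using Ps(2) Pne hdP ins by auto
    ultimately show ?thesis using dec cardL by metis
  qed
qed

lemma zp_pal: "zp_match k Ps U \<Longrightarrow> is_pal U"
  by (induction rule: zp_match.induct) (auto simp: is_pal_def)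

lemma zp_shrink: "zp_match k Ps U \<Longrightarrow> 1 \<le> k' \<Longrightarrow> k' \<le> k \<Longrightarrow> \<exists>q. matches_ZP k' (drop q U)"
proof (induction arbitrary: k' rule: zp_match.induct)
  case (base P)
  then have "k' = 1" by simp
  then show ?case using zp_match.base[OF base.hyps] unfolding matches_ZP_def by (metis drop0)
next
  case (step k Ps U P)
  show ?case
  proof (cases "k' = Suc k")
    case True
    then show ?thesis using zp_match.step[OF step.hyps] unfolding matches_ZP_def by (metis drop0)
  next
    case False
    then have "k' \<le> k" using step.prems by simp
    then obtain q where "matches_ZP k' (drop q U)" using step.IH step.prems(1) by blast
    moreover have "drop (length U + length P + q) (U @ P @ U) = drop q U" by simp
    ultimately show ?thesis by metis
  qed
qed

lemma ZP_final:
  assumes k: "1 \<le> k" and c: "k + 1 \<le> card (Pr (rev W) (length W))"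
  shows "\<exists>q \<le> length W. matches_ZP k (drop q W)"
proof -
  define V where "V = rev W"
  define n where "n = length W"
  have lV: "length V = n" unfolding V_def n_def by simp
  have ne: "Pr V n \<noteq> {}" using c k unfolding V_def n_def by auto
  define L' where "L' = Max (MM V n)"
  have L'm: "L' \<in> MM V n" and ins: "Pr V n = insert (V ! L') (Pr V L')"
    using MM_ins[OF ne] unfolding L'_def by auto
  have L': "L' < n" "PP V L'" "V ! L' \<notin> Pr V L'" using L'm unfolding MM_def by auto
  have cardL: "card (Pr V n) = Suc (card (Pr V L'))" using ins card_insert_disjoint[OF Pr_finite[of V L'] L'(3)] by simp
  then have kk: "k \<le> card (Pr V L')" using c unfolding V_def n_def by simp
  then have "Pr V L' \<noteq> {}" using k by auto
  then obtain Ps where Ps: "zp_match (card (Pr V L')) Ps (take L' V)" using ZPmain[OF L'(2) L'(3)] by blast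
  have "take L' V = rev (drop (n - L') W)" unfolding V_def n_def by (simp add: take_rev)
  moreover have "rev (take L' V) = take L' V" using zp_pal[OF Ps] unfolding is_pal_def .
  ultimately have eq: "take L' V = drop (n - L') W" by (metis rev_rev_ident)
  obtain q where q: "matches_ZP k (drop q (drop (n - L') W))" using zp_shrink[OF Ps k kk] eq by auto
  show ?thesis
  proof (cases "q + (n - L') \<le> n")
    case True then show ?thesis using q by (auto simp: add.commute n_def)
  next
    case False
    then have "drop (q + (n - L')) W = drop n W" unfolding n_def by simp
    then show ?thesis using q by (metis drop_drop n_def order_refl)
  qed
qed

lemma F_pal: "l < p \<Longrightarrow> p \<le> length S \<Longrightarrow> is_pal (take l (rev (take p S))) \<longleftrightarrow> palI S (p - l) p"
proof -
  assume lp: "l < p" "p \<le> length S"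
  have "take l (rev (take p S)) = rev (drop (p - l) (take p S))" using lp by (simp add: take_rev)
  moreover have "drop (p - l) (take p S) = take l (drop (p - l) S)" using lp by (simp add: drop_take)
  moreover have "is_pal (rev x) \<longleftrightarrow> is_pal x" for x :: "'a list" unfolding is_pal_def by auto
  moreover have "min (p - l + l) (length S) = p" using lp by simp
  ultimately show ?thesis using pal_conv[of l "p - l" S] by simp
qed

lemma F_nth: "l < p \<Longrightarrow> p \<le> length S \<Longrightarrow> rev (take p S) ! l = S ! (p - 1 - l)"
  by (simp add: rev_nth)

lemma F_char:
  assumes p: "p \<le> length S"
  shows "w \<in> Pr (rev (take p S)) p \<longleftrightarrow> (\<exists>a<p. palI S (Suc a) p \<and> S ! a = w)"
proof
  assume "w \<in> Pr (rev (take p S)) p"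
  then obtain l where l: "l < p" "is_pal (take l (rev (take p S)))" "rev (take p S) ! l = w"
    unfolding Pr_def PP_def by auto
  have "palI S (Suc (p - 1 - l)) p" using F_pal[OF l(1) p] l(2) l(1)
    by (metis Suc_diff_Suc diff_Suc_1 diff_diff_left plus_1_eq_Suc)
  moreover have "S ! (p - 1 - l) = w" using F_nth[OF l(1) p] l(3) by simp
  ultimately show "\<exists>a<p. palI S (Suc a) p \<and> S ! a = w" using l(1) by (metis diff_less_Suc Suc_diff_1 less_imp_diff_less gr_implies_not0 not_gr0 diff_less zero_less_one)
next
  assume "\<exists>a<p. palI S (Suc a) p \<and> S ! a = w"
  then obtain a where a: "a < p" "palI S (Suc a) p" "S ! a = w" by blast
  define l where "l = p - 1 - a"
  have l: "l < p" "p - l = Suc a" "p - 1 - l = a" unfolding l_def using a by arith+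
  have "is_pal (take l (rev (take p S)))" using F_pal[OF l(1) p] l(2) a(2) by simp
  moreover have "rev (take p S) ! l = w" using F_nth[OF l(1) p] l(3) a(3) by simp
  moreover have "l < length (rev (take p S))" using l p by simp
  ultimately show "w \<in> Pr (rev (take p S)) p" unfolding Pr_def PP_def using l(1) by auto
qed



lemma indep_ZP:
  fixes T :: "'a list" and S :: "nat list"
  assumes manS: "manacher S = manacher T"
    and lexmin: "\<forall>S' :: nat list. manacher S' = manacher T \<longrightarrow> lex_le S S'"
    and p: "p < length S" and ind: "\<not> (\<exists>i0<p. palI S i0 (Suc p))"
    and i: "3 \<le> i" and Sp: "S ! p = i - 1"
  shows "\<exists>t. 1 \<le> t \<and> t \<le> Suc p \<and> matches_ZP (i - 2) (substr S t p)"
proof -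
  have sub: "{..<i - 1} \<subseteq> Pr (rev (take p S)) p"
  proof
    fix v assume "v \<in> {..<i - 1}"
    then have "v < S ! p" using Sp by simp
    then have "\<exists>a<p. palI S (Suc a) p \<and> S ! a = v" using lexmin_small[OF manS lexmin p ind] by blast
    then show "v \<in> Pr (rev (take p S)) p" using F_char[of p S v] p by simp
  qed
  have "i - 1 \<le> card (Pr (rev (take p S)) p)"
    using card_mono[OF Pr_finite sub] by simp
  then have c: "(i - 2) + 1 \<le> card (Pr (rev (take p S)) (length (take p S)))" using p i by simp
  have k1: "1 \<le> i - 2" using i by arith
  obtain q where q: "q \<le> length (take p S)" "matches_ZP (i - 2) (drop q (take p S))"
    using ZP_final[OF k1 c] by blast
  have "substr S (Suc q) p = drop q (take p S)" unfolding substr_def by (simp add: drop_take)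
  then show ?thesis using q p by (intro exI[of _ "Suc q"]) auto
qed

theorem theorem5p1:
  fixes T :: "'a list" and S :: "nat list"
  assumes manS: "manacher S = manacher T"
    and lexmin: "\<forall>S' :: nat list. manacher S' = manacher T \<longrightarrow> lex_le S S'"
  shows
    "(\<forall>i\<ge>3. \<forall>m. 1 \<le> m \<and> m \<le> length S \<and> S ! (m - 1) = sigma i \<and>
          (\<forall>m'. 1 \<le> m' \<and> m' < m \<longrightarrow> S ! (m' - 1) \<noteq> sigma i) \<longrightarrow>
          (\<exists>t. 1 \<le> t \<and> t \<le> m \<and> matches_ZP (i - 2) (substr S t (m - 1))))
   \<and> (\<forall>i\<ge>3. \<forall>m. 1 \<le> m \<and> m \<le> length S \<and> S ! (m - 1) = sigma i \<and>
          (\<exists>m'. 1 \<le> m' \<and> m' < m \<and> S ! (m' - 1) = sigma i) \<longrightarrow>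
          pal_dependent S m \<or>
          (\<exists>t. 1 \<le> t \<and> t \<le> m \<and> matches_ZP (i - 2) (substr S t (m - 1))))
   \<and> (\<forall>U :: 'b list. manacher U = manacher T \<longrightarrow> card (set S) \<le> card (set U))"
proof (intro conjI allI impI)
  fix i m
  assume i: "3 \<le> i" and H: "1 \<le> m \<and> m \<le> length S \<and> S ! (m - 1) = sigma i \<and>
          (\<forall>m'. 1 \<le> m' \<and> m' < m \<longrightarrow> S ! (m' - 1) \<noteq> sigma i)"
  define p where "p = m - 1"
  have m: "m = Suc p" "p < length S" using H unfolding p_def by auto
  have Sp: "S ! p = i - 1" using H unfolding p_def sigma_def by simp
  have ind: "\<not> (\<exists>i0<p. palI S i0 (Suc p))"
  proof
    assume "\<exists>i0<p. palI S i0 (Suc p)"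
    then obtain i0 where i0: "i0 < p" "palI S i0 (Suc p)" by blast
    then have "S ! i0 = S ! p" using palI_peel[of i0 "Suc p" S] by simp
    moreover have "1 \<le> Suc i0 \<and> Suc i0 < m" using i0 m by simp
    then have "S ! (Suc i0 - 1) \<noteq> sigma i" using H by blast
    ultimately show False using Sp unfolding sigma_def by simp
  qed
  show "\<exists>t. 1 \<le> t \<and> t \<le> m \<and> matches_ZP (i - 2) (substr S t (m - 1))"
    using indep_ZP[OF manS lexmin m(2) ind i Sp] m by simp
next
  fix i m
  assume i: "3 \<le> i" and H: "1 \<le> m \<and> m \<le> length S \<and> S ! (m - 1) = sigma i \<and>
          (\<exists>m'. 1 \<le> m' \<and> m' < m \<and> S ! (m' - 1) = sigma i)"
  define p where "p = m - 1"
  have m: "m = Suc p" "p < length S" using H unfolding p_def by auto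
  have Sp: "S ! p = i - 1" using H unfolding p_def sigma_def by simp
  show "pal_dependent S m \<or> (\<exists>t. 1 \<le> t \<and> t \<le> m \<and> matches_ZP (i - 2) (substr S t (m - 1)))"
  proof (cases "\<exists>i0<p. palI S i0 (Suc p)")
    case True
    then obtain i0 where i0: "i0 < p" "palI S i0 (Suc p)" by blast
    have "is_pal (substr S (Suc i0) (Suc p))" using substr_pal[of i0 "Suc p" S] i0 m by simp
    then have "pal_dependent S m" unfolding pal_dependent_def using i0 m
      by (intro exI[of _ "Suc i0"] exI[of _ "Suc p"]) auto
    then show ?thesis by simp
  next
    case False
    then show ?thesis using indep_ZP[OF manS lexmin m(2) False i Sp] m by simp
  qed
next
  fix U :: "'b list"
  assume manU: "manacher U = manacher T"
  have peSU: "pe S U" using manacher_pe manS manU by metis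
  show "card (set S) \<le> card (set U)"
  proof (cases "S = []")
    case True then show ?thesis by simp
  next
    case False
    define v where "v = Max (set S)"
    have vin: "v \<in> set S" unfolding v_def using False by simp
    then have ex: "\<exists>p. p < length S \<and> S ! p = v" by (simp add: in_set_conv_nth)
    define p where "p = (LEAST p. p < length S \<and> S ! p = v)"
    have p: "p < length S" "S ! p = v" unfolding p_def using LeastI_ex[OF ex] by auto
    have pmin: "\<And>q. q < length S \<and> S ! q = v \<Longrightarrow> p \<le> q" unfolding p_def by (rule Least_le)
    have ind: "\<not> (\<exists>i0<p. palI S i0 (Suc p))"
    proof
      assume "\<exists>i0<p. palI S i0 (Suc p)"
      then obtain i0 where i0: "i0 < p" "palI S i0 (Suc p)" by blast
      then have "S ! i0 = v" using palI_peel[of i0 "Suc p" S] p by simp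
      then have "p \<le> i0" using pmin i0 p by simp
      then show False using i0 by simp
    qed
    have lU: "length U = length S" using pe_len[OF peSU] by simp
    define f where "f w = (SOME a. a < p \<and> palI S (Suc a) p \<and> S ! a = w)" for w
    have f: "f w < p \<and> palI S (Suc (f w)) p \<and> S ! (f w) = w" if "w < v" for w
    proof -
      have "\<exists>a<p. palI S (Suc a) p \<and> S ! a = w"
        using lexmin_small[OF manS lexmin p(1) ind] that p by simp
      then show ?thesis unfolding f_def by (rule someI_ex[where P = "\<lambda>a. a < p \<and> palI S (Suc a) p \<and> S ! a = w", simplified]) 
    qed
    define g where "g w = U ! f w" for w
    have inj: "inj_on g {..<v}"
    proof (rule inj_onI)
      fix w1 w2 assume w: "w1 \<in> {..<v}" "w2 \<in> {..<v}" "g w1 = g w2"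
      have f1: "f w1 < p \<and> palI S (Suc (f w1)) p \<and> S ! (f w1) = w1" using f w(1) by blast
      have f2: "f w2 < p \<and> palI S (Suc (f w2)) p \<and> S ! (f w2) = w2" using f w(2) by blast
      have pl: "p \<le> length S" using p by simp
      have iff: "S ! f w1 = S ! f w2 \<longleftrightarrow> U ! f w1 = U ! f w2"
        using ker[OF peSU pl, of "f w1" "f w2"] f1 f2 by blast
      have "U ! f w1 = U ! f w2" using w(3) unfolding g_def .
      then have "S ! f w1 = S ! f w2" using iff by blast
      then show "w1 = w2" using f1 f2 by simp
    qed
    have gp: "U ! p \<notin> g ` {..<v}"
    proof
      assume "U ! p \<in> g ` {..<v}"
      then obtain w where w: "w < v" "U ! f w = U ! p" unfolding g_def by auto
      have "palI U (Suc (f w)) p" using f[OF w(1)] pe_palI[OF peSU, of p] p by simp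
      then have "palI U (f w) (Suc p)" using palI_peel[of "f w" "Suc p" U] w f[OF w(1)] by simp
      then have "palI S (f w) (Suc p)" using pe_palI[OF peSU, of "Suc p"] p by simp
      then show False using ind f[OF w(1)] by blast
    qed
    have subU: "insert (U ! p) (g ` {..<v}) \<subseteq> set U"
    proof
      fix x assume "x \<in> insert (U ! p) (g ` {..<v})"
      then consider "x = U ! p" | w where "w < v" "x = U ! f w" unfolding g_def by auto
      then show "x \<in> set U"
      proof cases
        case 1 then show ?thesis using p lU by simp
      next
        case 2
        then have "f w < length U" using f[OF 2(1)] p lU by simp
        then show ?thesis using 2 by simp
      qed
    qed
    have "card (insert (U ! p) (g ` {..<v})) = Suc v"
      using gp card_image[OF inj] by simp
    then have "Suc v \<le> card (set U)" using card_mono[OF _ subU] by simp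
    moreover have "card (set S) \<le> Suc v"
    proof -
      have "set S \<subseteq> {..v}" unfolding v_def by auto
      then show ?thesis using card_mono[of "{..v}" "set S"] by simp
    qed
    ultimately show ?thesis by simp
  qed
qed


end
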